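(* Assume $\ker(K)\cap\ker(D)=\{0\}$. Fix $\delta\ge0$ and a vector of observations $y^\delta=Kx^{GT}+e$ with $\|e\|_2\le\delta$. Let $\{\Psi_k\}_{k\in\mathbb{N}}$ be a sequence of reconstructors such that one of the following holds: 1. $\|\Psi_k(y^\delta)-x^{GT}\|_1\to0$ as $k\to\infty$; 2. $\|\,|D\Psi_k(y^\delta)|-|Dx^{GT}|\,\|_1\to0$ as $k\to\infty$. For each $k$ let $x^*_{\Psi_k,\delta}$ be the unique minimizer over $\mathcal{X}$ of $\mathcal{J}_{\Psi_k,\delta}(x)=\|Kx-y^\delta\|_2^2+\lambda\|w(\Psi_k(y^\delta))\odot|Dx|\|_1$, and let $x^*_{GT,\delta}$ denote the unique minimizer over $\mathcal{X}$ of $\mathcal{J}_{GT,\delta}(x)=\|Kx-y^\delta\|_2^2+\lambda\|w(x^{GT})\odot|Dx|\|_1$. Then $\{x^*_{\Psi_k,\delta}\}_{k\in\mathbb{N}}$ has a convergent subsequence whose limit is $x^*_{GT,\delta}$.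
   Context: Let $K\in\mathbb{R}^{m\times n}$ with $m\le n$, and let $D_h,D_v\in\mathbb{R}^{n\times n}$ be the discrete horizontal and vertical difference operators; $Dx=\begin{bmatrix}D_hx\\ D_vx\end{bmatrix}\in\mathbb{R}^{2n}$, and $|Dx|\in\mathbb{R}^n$, $(|Dx|)_i=\sqrt{(D_hx)_i^2+(D_vx)_i^2}$. $\mathcal{X}=\{x\in\mathbb{R}^n: x_i\ge 0\ \forall i\}$ and $x^{GT}\in\mathcal{X}$ is the ground truth. Fix $\lambda>0$, $\eta>0$, $p\in(0,1)$, and for $\tilde x\in\mathbb{R}^n$ define $(w(\tilde{x}))_i=\big(\eta/\sqrt{\eta^2+(|D\tilde{x}|)_i^2}\big)^{1-p}$. A reconstructor is a Lipschitz continuous map $\Psi:\mathbb{R}^m\to\mathbb{R}^n$. $\odot$ is the entrywise product. *)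

theory Defs
  imports "HOL-Analysis.Analysis"
begin

text \<open>Vectors in R^n are real^'n, K is an m x n matrix (real^'n^'m).
  Dh, Dv are the (linear) difference operators, given as n x n matrices.\<close>

definition nonneg_orthant :: "(real^'n) set" where
  "nonneg_orthant = {x. \<forall>i. x $ i \<ge> 0}"

definition absD :: "real^'n^'n \<Rightarrow> real^'n^'n \<Rightarrow> real^'n \<Rightarrow> real^'n" where
  "absD Dh Dv x = (\<chi> i. sqrt (((Dh *v x) $ i)\<^sup>2 + ((Dv *v x) $ i)\<^sup>2))"

definition weight :: "real^'n^'n \<Rightarrow> real^'n^'n \<Rightarrow> real \<Rightarrow> real \<Rightarrow> real^'n \<Rightarrow> real^'n" where
  "weight Dh Dv \<eta> p xt = (\<chi> i. (\<eta> / sqrt (\<eta>\<^sup>2 + ((absD Dh Dv xt) $ i)\<^sup>2)) powr (1 - p))"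

definition norm1 :: "real^'n \<Rightarrow> real" where
  "norm1 x = (\<Sum>i\<in>UNIV. \<bar>x $ i\<bar>)"

definition Jfun :: "real^'n^'m \<Rightarrow> real^'n^'n \<Rightarrow> real^'n^'n \<Rightarrow> real \<Rightarrow> real \<Rightarrow> real
    \<Rightarrow> real^'m \<Rightarrow> real^'n \<Rightarrow> real^'n \<Rightarrow> real" where
  "Jfun K Dh Dv lam \<eta> p y xt x =
     (norm (K *v x - y))\<^sup>2
     + lam * norm1 (\<chi> i. (weight Dh Dv \<eta> p xt) $ i * (absD Dh Dv x) $ i)"

definition is_unique_minimizer :: "('a \<Rightarrow> real) \<Rightarrow> 'a set \<Rightarrow> 'a \<Rightarrow> bool" where
  "is_unique_minimizer J S x \<longleftrightarrow> x \<in> S \<and> (\<forall>z\<in>S. J x \<le> J z) \<and>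
     (\<forall>x'\<in>S. (\<forall>z\<in>S. J x' \<le> J z) \<longrightarrow> x' = x)"

end

theory Submission
  imports Defs
begin

definition JW :: "real^'n^'m \<Rightarrow> real^'n^'n \<Rightarrow> real^'n^'n \<Rightarrow> real
    \<Rightarrow> real^'m \<Rightarrow> real^'n \<Rightarrow> real^'n \<Rightarrow> real" where
  "JW K Dh Dv lam y W x = (norm (K *v x - y))\<^sup>2
     + lam * norm1 (\<chi> i. W $ i * (absD Dh Dv x) $ i)"

lemma Jfun_JW: "Jfun K Dh Dv lam \<eta> p y xt x = JW K Dh Dv lam y (weight Dh Dv \<eta> p xt) x"
  unfolding Jfun_def JW_def by simp

lemma mv_tendsto:
  assumes "(x \<longlongrightarrow> a) F"
  shows "((\<lambda>j. (A::real^'n^'m) *v x j) \<longlongrightarrow> A *v a) F"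
proof -
  have "bounded_linear (\<lambda>x. A *v (x::real^'n))"
    by (simp add: linear_linear)
  then show ?thesis using bounded_linear.tendsto assms by blast
qed

lemma absD_tendsto:
  assumes "(x \<longlongrightarrow> a) F"
  shows "((\<lambda>j. absD Dh Dv (x j)) \<longlongrightarrow> absD Dh Dv a) F"
proof (rule vec_tendstoI)
  fix i
  have h: "((\<lambda>j. (Dh *v x j) $ i) \<longlongrightarrow> (Dh *v a) $ i) F"
    by (intro tendsto_vec_nth mv_tendsto assms)
  have v: "((\<lambda>j. (Dv *v x j) $ i) \<longlongrightarrow> (Dv *v a) $ i) F"
    by (intro tendsto_vec_nth mv_tendsto assms)
  show "((\<lambda>j. absD Dh Dv (x j) $ i) \<longlongrightarrow> absD Dh Dv a $ i) F"
    unfolding absD_def using h v by (simp add: tendsto_intros)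
qed

lemma JW_tendsto:
  assumes "(W \<longlongrightarrow> W0) F" "(x \<longlongrightarrow> a) F"
  shows "((\<lambda>j. JW K Dh Dv lam y (W j) (x j)) \<longlongrightarrow> JW K Dh Dv lam y W0 a) F"
proof -
  have A: "\<And>i. ((\<lambda>j. absD Dh Dv (x j) $ i) \<longlongrightarrow> absD Dh Dv a $ i) F"
    by (intro tendsto_vec_nth absD_tendsto assms)
  have B: "\<And>i. ((\<lambda>j. W j $ i) \<longlongrightarrow> W0 $ i) F"
    by (intro tendsto_vec_nth assms)
  have C: "((\<lambda>j. K *v x j) \<longlongrightarrow> K *v a) F" by (rule mv_tendsto[OF assms(2)])
  show ?thesis unfolding JW_def norm1_def
    using A B C by (simp add: tendsto_intros)
qed

lemma norm1_conv:
  assumes "(\<lambda>k. norm1 (f k - a)) \<longlonglongrightarrow> 0"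
  shows "f \<longlonglongrightarrow> (a::real^'n)"
proof -
  have "(\<lambda>k. f k - a) \<longlonglongrightarrow> 0"
    apply (rule Lim_null_comparison[OF _ assms])
    apply (rule always_eventually)
    apply (unfold norm1_def)
    apply (rule allI)
    apply (rule norm_le_l1_cart)
    done
  then show ?thesis by (simp add: LIM_zero_cancel)
qed

lemma weight_tendsto:
  assumes "((\<lambda>k. absD Dh Dv (a k)) \<longlongrightarrow> absD Dh Dv b) F" "\<eta> > 0"
  shows "((\<lambda>k. weight Dh Dv \<eta> p (a k)) \<longlongrightarrow> weight Dh Dv \<eta> p b) F"
proof (rule vec_tendstoI)
  fix i
  have A: "((\<lambda>k. absD Dh Dv (a k) $ i) \<longlongrightarrow> absD Dh Dv b $ i) F"
    by (intro tendsto_vec_nth assms)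
  have pos: "\<eta> / sqrt (\<eta>\<^sup>2 + (absD Dh Dv b $ i)\<^sup>2) \<noteq> 0"
    using assms(2) by (simp add: add_pos_nonneg)
  have "((\<lambda>k. \<eta> / sqrt (\<eta>\<^sup>2 + (absD Dh Dv (a k) $ i)\<^sup>2)) \<longlongrightarrow> \<eta> / sqrt (\<eta>\<^sup>2 + (absD Dh Dv b $ i)\<^sup>2)) F"
    using assms(2) by (intro tendsto_divide tendsto_const tendsto_real_sqrt tendsto_add tendsto_power A) (auto simp: add_pos_nonneg)
  then have "((\<lambda>k. (\<eta> / sqrt (\<eta>\<^sup>2 + (absD Dh Dv (a k) $ i)\<^sup>2)) powr (1 - p)) \<longlongrightarrow> (\<eta> / sqrt (\<eta>\<^sup>2 + (absD Dh Dv b $ i)\<^sup>2)) powr (1-p)) F"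
    using pos by (intro tendsto_powr) auto
  then show "((\<lambda>k. weight Dh Dv \<eta> p (a k) $ i) \<longlongrightarrow> weight Dh Dv \<eta> p b $ i) F"
    unfolding weight_def by simp
qed

lemma weight_pos: "\<eta> > 0 \<Longrightarrow> weight Dh Dv \<eta> p b $ i > 0"
  unfolding weight_def by (simp add: add_pos_nonneg)

lemma absD_nonneg: "absD Dh Dv x $ i \<ge> 0"
  unfolding absD_def by simp

lemma absD_zero: "absD Dh Dv 0 = 0"
  unfolding absD_def by (simp add: vec_eq_iff)

lemma norm_D_le: "norm (Dh *v x) \<le> (\<Sum>i\<in>UNIV. absD Dh Dv x $ i)"
      "norm (Dv *v x) \<le> (\<Sum>i\<in>UNIV. absD Dh Dv x $ i)"
proof -
  show "norm (Dh *v x) \<le> (\<Sum>i\<in>UNIV. absD Dh Dv x $ i)"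
  proof (rule order_trans[OF norm_le_l1_cart])
    show "(\<Sum>i\<in>UNIV. \<bar>(Dh *v x) $ i\<bar>) \<le> (\<Sum>i\<in>UNIV. absD Dh Dv x $ i)"
      unfolding absD_def by (intro sum_mono) (simp add: real_sqrt_ge_abs1)
  qed
  show "norm (Dv *v x) \<le> (\<Sum>i\<in>UNIV. absD Dh Dv x $ i)"
  proof (rule order_trans[OF norm_le_l1_cart])
    show "(\<Sum>i\<in>UNIV. \<bar>(Dv *v x) $ i\<bar>) \<le> (\<Sum>i\<in>UNIV. absD Dh Dv x $ i)"
      unfolding absD_def by (intro sum_mono) (simp add: real_sqrt_ge_abs2)
  qed
qed

lemma bound_lemma:
  assumes c: "c > 0" and Wc: "\<forall>i. W $ i \<ge> c" and lam: "lam > 0"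
    and le: "JW K Dh Dv lam y W x \<le> JW K Dh Dv lam y W 0"
  shows "norm (K *v x) + norm (Dh *v x) + norm (Dv *v x) \<le> 2 * norm y + 2 * (norm y)\<^sup>2 / (lam * c)"
proof -
  let ?S = "(\<Sum>i\<in>UNIV. absD Dh Dv x $ i)"
  have J0: "JW K Dh Dv lam y W 0 = (norm y)\<^sup>2"
    unfolding JW_def norm1_def by (simp add: absD_zero)
  have n1: "norm1 (\<chi> i. W $ i * (absD Dh Dv x) $ i) = (\<Sum>i\<in>UNIV. W $ i * absD Dh Dv x $ i)"
    unfolding norm1_def
  proof (intro sum.cong refl)
    fix i
    show "\<bar>(\<chi> i. W $ i * absD Dh Dv x $ i) $ i\<bar> = W $ i * absD Dh Dv x $ i"
      using Wc[rule_format, of i] c absD_nonneg[of Dh Dv x i] by simp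
  qed
  have "c * ?S \<le> (\<Sum>i\<in>UNIV. W $ i * absD Dh Dv x $ i)"
    unfolding sum_distrib_left using Wc absD_nonneg by (intro sum_mono mult_right_mono) auto
  have n1nn: "0 \<le> (\<Sum>i\<in>UNIV. W $ i * absD Dh Dv x $ i)"
    using Wc c absD_nonneg by (intro sum_nonneg mult_nonneg_nonneg) (auto intro: order_trans[OF less_imp_le[OF c]])
  have lT: "0 \<le> lam * (\<Sum>i\<in>UNIV. W $ i * absD Dh Dv x $ i)"
    using n1nn lam by simp
  have le2: "(norm (K *v x - y))\<^sup>2 + lam * (\<Sum>i\<in>UNIV. W $ i * absD Dh Dv x $ i) \<le> (norm y)\<^sup>2"
    using le[unfolded J0, unfolded JW_def n1] by simp
  have A: "(norm (K *v x - y))\<^sup>2 \<le> (norm y)\<^sup>2"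
    using le2 lT by linarith
  have B: "lam * (\<Sum>i\<in>UNIV. W $ i * absD Dh Dv x $ i) \<le> (norm y)\<^sup>2"
    using le2 zero_le_power2[of "norm (K *v x - y)"] by linarith
  have "norm (K *v x - y) \<le> norm y" using A by (simp add: power_mono_iff)
  moreover have "norm (K *v x) \<le> norm (K *v x - y) + norm y"
    using norm_triangle_ineq[of "K *v x - y" y] by simp
  ultimately have K: "norm (K *v x) \<le> 2 * norm y" by linarith
  have "lam * (c * ?S) \<le> lam * (\<Sum>i\<in>UNIV. W $ i * absD Dh Dv x $ i)"
    using \<open>c * ?S \<le> _\<close> lam by (intro mult_left_mono) auto
  then have "lam * (c * ?S) \<le> (norm y)\<^sup>2" using B by linarith
  then have S: "?S \<le> (norm y)\<^sup>2 / (lam * c)"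
    using lam c by (simp add: field_simps)
  have D1: "norm (Dh *v x) \<le> ?S" "norm (Dv *v x) \<le> ?S" by (rule norm_D_le)+
  show ?thesis using K S D1 by linarith
qed

lemma umin_le: "is_unique_minimizer J S x \<Longrightarrow> z \<in> S \<Longrightarrow> J x \<le> J z"
  unfolding is_unique_minimizer_def by blast

lemma umin_mem: "is_unique_minimizer J S x \<Longrightarrow> x \<in> S"
  unfolding is_unique_minimizer_def by blast

lemma umin_uniq: "is_unique_minimizer J S x \<Longrightarrow> x' \<in> S \<Longrightarrow> \<forall>z\<in>S. J x' \<le> J z \<Longrightarrow> x' = x"
  unfolding is_unique_minimizer_def by blast

lemma bound_below:
  fixes K :: "real^'n^'m" and Dh Dv :: "real^'n^'n"
  assumes ker: "\<forall>x. K *v x = 0 \<and> Dh *v x = 0 \<and> Dv *v x = 0 \<longrightarrow> x = 0"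
  shows "\<exists>B>0. \<forall>x. B * norm x \<le> norm (K *v x, Dh *v x, Dv *v x)"
proof -
  have "bounded_linear (\<lambda>x. (K *v x, Dh *v x, Dv *v x))"
    by (intro bounded_linear_Pair matrix_vector_mul_bounded_linear)
  then have lin: "linear (\<lambda>x. (K *v x, Dh *v x, Dv *v x))" by (rule bounded_linear.linear)
  have inj: "inj (\<lambda>x. (K *v x, Dh *v x, Dv *v x))"
    unfolding linear_injective_0[OF lin]
  proof (intro allI impI)
    fix x assume h: "(K *v x, Dh *v x, Dv *v x) = 0"
    then have "K *v x = 0 \<and> Dh *v x = 0 \<and> Dv *v x = 0" by (simp add: prod_eq_iff)
    then show "x = 0" using ker by blast
  qed
  obtain B where "B > 0" "\<And>x. B * norm x \<le> norm (K *v x, Dh *v x, Dv *v x)"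
    using linear_inj_bounded_below_pos[OF lin inj] by blast
  then show ?thesis by (intro exI[of _ B] conjI allI) auto
qed

theorem corollary2:
  fixes K :: "real^'n^'m" and Dh Dv :: "real^'n^'n"
    and lam \<eta> p \<delta> :: real
    and xGT :: "real^'n" and e y :: "real^'m"
    and \<Psi> :: "nat \<Rightarrow> real^'m \<Rightarrow> real^'n"
    and xk :: "nat \<Rightarrow> real^'n" and xgt :: "real^'n"
  assumes mn: "CARD('m) \<le> CARD('n)"
    and lam: "lam > 0" and eta: "\<eta> > 0" and p: "0 < p" "p < 1"
    and GT: "xGT \<in> nonneg_orthant"
    and ker: "\<forall>x. K *v x = 0 \<and> Dh *v x = 0 \<and> Dv *v x = 0 \<longrightarrow> x = 0"
    and delta: "\<delta> \<ge> 0"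
    and obs: "y = K *v xGT + e" and noise: "norm e \<le> \<delta>"
    and lip: "\<forall>k. \<exists>L. L-lipschitz_on UNIV (\<Psi> k)"
    and conv: "((\<lambda>k. norm1 (\<Psi> k y - xGT)) \<longlonglongrightarrow> 0) \<or>
               ((\<lambda>k. norm1 (absD Dh Dv (\<Psi> k y) - absD Dh Dv xGT)) \<longlonglongrightarrow> 0)"
    and minK: "\<forall>k. is_unique_minimizer (Jfun K Dh Dv lam \<eta> p y (\<Psi> k y)) nonneg_orthant (xk k)"
    and minGT: "is_unique_minimizer (Jfun K Dh Dv lam \<eta> p y xGT) nonneg_orthant xgt"
  shows "\<exists>r. strict_mono r \<and> ((xk \<circ> r) \<longlonglongrightarrow> xgt)"
proof -
  define W where "W k = weight Dh Dv \<eta> p (\<Psi> k y)" for k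
  define W0 where "W0 = weight Dh Dv \<eta> p xGT"
  have aconv: "(\<lambda>k. absD Dh Dv (\<Psi> k y)) \<longlonglongrightarrow> absD Dh Dv xGT"
    using conv
  proof
    assume "(\<lambda>k. norm1 (\<Psi> k y - xGT)) \<longlonglongrightarrow> 0"
    then have "(\<lambda>k. \<Psi> k y) \<longlonglongrightarrow> xGT" by (rule norm1_conv)
    then show ?thesis by (rule absD_tendsto)
  next
    assume "(\<lambda>k. norm1 (absD Dh Dv (\<Psi> k y) - absD Dh Dv xGT)) \<longlonglongrightarrow> 0"
    then show ?thesis by (rule norm1_conv)
  qed
  have Wconv: "W \<longlonglongrightarrow> W0"
  proof -
    show ?thesis unfolding W_def W0_def by (rule weight_tendsto[OF aconv eta])
  qed
  have W0pos: "\<And>i. W0 $ i > 0" unfolding W0_def using eta by (rule weight_pos)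
  define c where "c = Min (range (\<lambda>i. W0 $ i)) / 2"
  have cpos: "c > 0" unfolding c_def using W0pos by simp
  have cle: "\<And>i. c < W0 $ i"
  proof -
    fix i
    have "Min (range (\<lambda>i. W0 $ i)) \<le> W0 $ i" by simp
    moreover have "Min (range (\<lambda>i. W0 $ i)) > 0" using W0pos by simp
    ultimately show "c < W0 $ i" unfolding c_def by linarith
  qed
  have "\<forall>\<^sub>F k in sequentially. \<forall>i. W k $ i > c"
  proof (rule eventually_all_finite)
    fix i
    show "\<forall>\<^sub>F k in sequentially. W k $ i > c"
      by (rule order_tendstoD(1)[OF tendsto_vec_nth[OF Wconv] cle])
  qed
  then obtain N where N: "\<And>k. k \<ge> N \<Longrightarrow> \<forall>i. W k $ i > c"
    unfolding eventually_sequentially by blast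
  obtain B where B: "B > 0" "\<And>x. B * norm x \<le> norm (K *v x, Dh *v x, Dv *v x)"
    using bound_below[OF ker] by blast
  define M where "M = 2 * norm y + 2 * (norm y)\<^sup>2 / (lam * c)"
  define u where "u j = xk (j + N)" for j
  have ubnd: "norm (u j) \<le> M / B" for j
  proof -
    have Wc: "\<forall>i. W (j + N) $ i \<ge> c" by (meson N le_add2 less_imp_le)
    have z0: "0 \<in> (nonneg_orthant :: (real^'n) set)"
      unfolding nonneg_orthant_def by simp
    have "Jfun K Dh Dv lam \<eta> p y (\<Psi> (j+N) y) (xk (j+N)) \<le> Jfun K Dh Dv lam \<eta> p y (\<Psi> (j+N) y) 0"
      by (rule umin_le[OF minK[rule_format] z0])
    then have le: "JW K Dh Dv lam y (W (j+N)) (u j) \<le> JW K Dh Dv lam y (W (j+N)) 0"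
      unfolding u_def W_def Jfun_JW .
    have "norm (K *v u j) + norm (Dh *v u j) + norm (Dv *v u j) \<le> M"
      unfolding M_def by (rule bound_lemma[OF cpos Wc lam le])
    moreover have "norm (K *v u j, Dh *v u j, Dv *v u j) \<le> norm (K *v u j) + norm (Dh *v u j) + norm (Dv *v u j)"
    proof -
      have "norm (K *v u j, Dh *v u j, Dv *v u j) \<le> norm (K *v u j) + norm (Dh *v u j, Dv *v u j)"
        by (rule norm_Pair_le)
      also have "\<dots> \<le> norm (K *v u j) + (norm (Dh *v u j) + norm (Dv *v u j))"
        by (intro add_left_mono norm_Pair_le)
      finally show ?thesis by simp
    qed
    ultimately have "B * norm (u j) \<le> M" using B(2)[of "u j"] by linarith
    then show ?thesis using B(1) by (simp add: pos_le_divide_eq mult.commute)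
  qed
  have bu: "bounded (range u)" 
  proof (rule boundedI)
    fix v assume "v \<in> range u"
    then obtain j where "v = u j" by blast
    then show "norm v \<le> M / B" using ubnd by simp
  qed
  then obtain l r where r: "strict_mono r" and ul: "(u \<circ> r) \<longlonglongrightarrow> l"
    using bounded_imp_convergent_subsequence[OF bu] by blast
  define s where "s j = r j + N" for j
  have s: "strict_mono s" using r unfolding s_def strict_mono_def by auto
  have xs: "(xk \<circ> s) \<longlonglongrightarrow> l" using ul unfolding s_def u_def comp_def by simp
  have xkO: "xk k \<in> nonneg_orthant" for k by (rule umin_mem[OF minK[rule_format]])
  have lO: "l \<in> nonneg_orthant"
    unfolding nonneg_orthant_def
  proof (intro CollectI allI)
    fix i
    have "(\<lambda>j. (xk \<circ> s) j $ i) \<longlonglongrightarrow> l $ i" by (intro tendsto_vec_nth xs)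
    moreover have "\<forall>n\<ge>0. 0 \<le> (xk \<circ> s) n $ i" using xkO unfolding nonneg_orthant_def by auto
    ultimately show "0 \<le> l $ i" by (intro LIMSEQ_le_const) auto
  qed
  have Ws: "(W \<circ> s) \<longlonglongrightarrow> W0" by (rule LIMSEQ_subseq_LIMSEQ[OF Wconv s])
  have lmin: "\<forall>z\<in>nonneg_orthant. Jfun K Dh Dv lam \<eta> p y xGT l \<le> Jfun K Dh Dv lam \<eta> p y xGT z"
  proof
    fix z :: "real^'n" assume z: "z \<in> nonneg_orthant"
    have f: "(\<lambda>j. JW K Dh Dv lam y ((W \<circ> s) j) ((xk \<circ> s) j)) \<longlonglongrightarrow> JW K Dh Dv lam y W0 l"
      by (rule JW_tendsto[OF Ws xs])
    have g: "(\<lambda>j. JW K Dh Dv lam y ((W \<circ> s) j) z) \<longlonglongrightarrow> JW K Dh Dv lam y W0 z"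
      by (rule JW_tendsto[OF Ws tendsto_const])
    have "\<forall>j. JW K Dh Dv lam y ((W \<circ> s) j) ((xk \<circ> s) j) \<le> JW K Dh Dv lam y ((W \<circ> s) j) z"
    proof
      fix j
      have "Jfun K Dh Dv lam \<eta> p y (\<Psi> (s j) y) (xk (s j)) \<le> Jfun K Dh Dv lam \<eta> p y (\<Psi> (s j) y) z"
        by (rule umin_le[OF minK[rule_format] z])
      then show "JW K Dh Dv lam y ((W \<circ> s) j) ((xk \<circ> s) j) \<le> JW K Dh Dv lam y ((W \<circ> s) j) z"
        unfolding W_def Jfun_JW comp_def .
    qed
    then have "JW K Dh Dv lam y W0 l \<le> JW K Dh Dv lam y W0 z"
      by (intro tendsto_le[OF _ g f]) auto
    then show "Jfun K Dh Dv lam \<eta> p y xGT l \<le> Jfun K Dh Dv lam \<eta> p y xGT z"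
      unfolding Jfun_JW W0_def .
  qed
  have "l = xgt" by (rule umin_uniq[OF minGT lO lmin])
  then have xs': "(xk \<circ> s) \<longlonglongrightarrow> xgt" using xs by simp
  show ?thesis by (rule exI[of _ s]) (rule conjI[OF s xs'])
qed

end
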